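(* Let $X$ be an affine pseudo-plane of type $(d,r)$ (i.e. $(d,1,r)$). Then the fundamental group at infinity $\pi_{1,\infty}(X)$ is the group generated by two elements $x,y$ subject to the relations $x^r=y^d=(xy)^d$. If $r=1$, then $\pi_{1,\infty}(X)$ is a finite cyclic group of order $d^2$.
   Context: Work over $k=\mathbb{C}$. An $\mathbb{A}^1$-fibration is a morphism $f:X\to B$ with $f^{-1}(U)\cong U\times\mathbb{A}^1$ over a non-empty open $U\subseteq B$; multiplicity of a fiber $\sum\mu_iC_i$ is $\gcd(\mu_i)$. An affine pseudo-plane is a smooth affine surface $X$ with an $\mathbb{A}^1$-fibration $\rho:X\to A\cong\mathbb{A}^1$ having exactly one multiple fiber, of multiplicity $d\ge2$. For $d\ge2,n\ge1,r\ge1$, $X$ has type $(d,n,r)$ if $X=V\setminus D$ where $V$ (with a $\mathbb{P}^1$-fibration extending $\rho$) is obtained from the Hirzebruch surface $\Sigma_n$ (minimal section $S'$, $S'^2=-n$, distinct fibers $\ell_0,\ell_\infty$) by: blowing up a point of $\ell_0$ off $S'$ ($E_1$); blowing up $E_1\cap\ell_0$ ($E_2$); for $3\le i\le d$ blowing up $E_1\cap E_{i-1}$ ($E_i$); for $d+1\le i\le d+r$ blowing up a point of $E_{i-1}$ on no other component of the total transform of $\ell_0$ ($E_i$); $D=\ell'_\infty+S'+\ell'_0+E_1+\dots+E_{d+r-1}$ (proper transforms). Equivalently the weighted dual graph of $D$ is the chain $\ell'_\infty(0)-S'(-n)-\ell'_0(-2)-E_2(-2)-\dots-E_d(-2)$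 with the chains $E_d-E_1(-d)$ and $E_d-E_{d+1}(-2)-\dots-E_{d+r-1}(-2)$ attached at $E_d$ (weights are self-intersections). Type $(d,r)$ means $(d,1,r)$. Fundamental group at infinity: if a smooth affine surface $X$ has a smooth projective compactification $V$ with $D=V\setminus X$ a simple normal crossing divisor whose weighted dual graph $\Gamma$ is a tree of smooth rational curves, $\pi_{1,\infty}(X)$ is the group $\pi_1(\Gamma)$ with one generator for each vertex, the vertices being ordered $v_1,v_2,\dots$, and relations: for each vertex $v$ of weight $w$, if $v_{i_1},\dots,v_{i_s}$ ($i_1<\dots<i_s$) are $v$ together with its neighbours and $v=v_{i_a}$, then $v_{i_1}\cdots v_{i_{a-1}}v_{i_a}^{w}v_{i_{a+1}}\cdots v_{i_s}=e$; and any two adjacent vertices commute. This group does not depend on the choices made. *)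

theory Defs
  imports "HOL-Algebra.Generated_Groups"
begin

text \<open>A word is a list of letters (g, True) = g and (g, False) = g inverse.\<close>
type_synonym 'g word = "('g \<times> bool) list"

definition inv_word :: "'g word \<Rightarrow> 'g word" where
  "inv_word w = rev (map (\<lambda>(a, b). (a, \<not> b)) w)"

definition pow_word :: "'g \<Rightarrow> int \<Rightarrow> 'g word" where
  "pow_word a k = (if 0 \<le> k then replicate (nat k) (a, True) else replicate (nat (- k)) (a, False))"

definition words_on :: "'g set \<Rightarrow> 'g word set" where
  "words_on S = {w. fst ` set w \<subseteq> S}"

text \<open>Equality in the group presented by the relators R (words equal to the identity).\<close>
inductive pres_rel :: "'g word set \<Rightarrow> 'g word \<Rightarrow> 'g word \<Rightarrow> bool" for R where
  refl: "pres_rel R w w"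
| sym: "pres_rel R u v \<Longrightarrow> pres_rel R v u"
| trans: "pres_rel R u v \<Longrightarrow> pres_rel R v w \<Longrightarrow> pres_rel R u w"
| cancel: "pres_rel R (u @ [(a, b), (a, \<not> b)] @ v) (u @ v)"
| relator: "r \<in> R \<Longrightarrow> pres_rel R (u @ r @ v) (u @ v)"

definition presented_group :: "'g set \<Rightarrow> 'g word set \<Rightarrow> ('g word set) monoid" where
  "presented_group S R =
    \<lparr> carrier = words_on S // {(u, v). u \<in> words_on S \<and> v \<in> words_on S \<and> pres_rel R u v},
      mult = (\<lambda>A B. {w \<in> words_on S. \<exists>u\<in>A. \<exists>v\<in>B. pres_rel R (u @ v) w}),
      one = {w \<in> words_on S. pres_rel R [] w} \<rparr>"

text \<open>The relation for vertex v: the product, in increasing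
  order of index, of v and its neighbours, with v raised to its weight, equals e;
  adjacent vertices commute.\<close>

definition vertex_relator :: "nat \<Rightarrow> (nat \<Rightarrow> int) \<Rightarrow> (nat \<Rightarrow> nat \<Rightarrow> bool) \<Rightarrow> nat \<Rightarrow> nat word" where
  "vertex_relator N wt adj v =
     concat (map (\<lambda>u. if u = v then pow_word v (wt v) else [(u, True)])
                 (sorted_list_of_set ({v} \<union> {u. u < N \<and> adj v u})))"

definition commutator_word :: "'g \<Rightarrow> 'g \<Rightarrow> 'g word" where
  "commutator_word a b = [(a, True), (b, True), (a, False), (b, False)]"

definition pi1_graph :: "nat \<Rightarrow> (nat \<Rightarrow> int) \<Rightarrow> (nat \<Rightarrow> nat \<Rightarrow> bool) \<Rightarrow> (nat word set) monoid" where
  "pi1_graph N wt adj = presented_group {..<N}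
     ({vertex_relator N wt adj v | v. v < N} \<union>
      {commutator_word u v | u v. u < N \<and> v < N \<and> adj u v})"

text \<open>Vertex indexing (d+r+2 vertices):
  0 = l'_inf (weight 0), 1 = S' (weight -n), 2 = l'_0 (weight -2),
  i+1 = E_i for 2 \<le> i \<le> d (weight -2), d+2 = E_1 (weight -d),
  j+2 = E_j for d+1 \<le> j \<le> d+r-1 (weight -2).
  Edges: chain 0-1-...-(d+1); (d+1)-(d+2); chain (d+1)-(d+3)-...-(d+r+1).\<close>

definition pp_nverts :: "nat \<Rightarrow> nat \<Rightarrow> nat" where
  "pp_nverts d r = d + r + 2"

definition pp_weight :: "nat \<Rightarrow> nat \<Rightarrow> nat \<Rightarrow> nat \<Rightarrow> int" where
  "pp_weight d n r i = (if i = 0 then 0 else if i = 1 then - int n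
                        else if i = d + 2 then - int d else -2)"

definition pp_edge :: "nat \<Rightarrow> nat \<Rightarrow> nat \<Rightarrow> nat \<Rightarrow> bool" where
  "pp_edge d r i j =
     ((i < d + 1 \<and> j = i + 1) \<or>
      (i = d + 1 \<and> j = d + 2) \<or>
      (2 \<le> r \<and> i = d + 1 \<and> j = d + 3) \<or>
      (d + 3 \<le> i \<and> i < d + r + 1 \<and> j = i + 1))"

definition pp_adj :: "nat \<Rightarrow> nat \<Rightarrow> nat \<Rightarrow> nat \<Rightarrow> bool" where
  "pp_adj d r i j = (pp_edge d r i j \<or> pp_edge d r j i)"

definition pi1_inf_pseudo_plane :: "nat \<Rightarrow> nat \<Rightarrow> nat \<Rightarrow> (nat word set) monoid" where
  "pi1_inf_pseudo_plane d n r = pi1_graph (pp_nverts d r) (pp_weight d n r) (pp_adj d r)"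

text \<open>The group \<langle>x, y | x^r = y^d = (xy)^d\<rangle>, with x = 0, y = 1.\<close>
definition xy_group :: "nat \<Rightarrow> nat \<Rightarrow> (nat word set) monoid" where
  "xy_group d r = presented_group {0, 1}
     { pow_word 0 (int r) @ inv_word (pow_word 1 (int d)),
       pow_word 1 (int d) @ inv_word (concat (replicate d [(0, True), (1, True)])) }"

end

theory Submission
  imports Defs "HOL-Algebra.Elementary_Groups"
begin



section \<open>Evaluation of words\<close>

fun ev :: "('a, 'b) monoid_scheme \<Rightarrow> ('g \<Rightarrow> 'a) \<Rightarrow> 'g word \<Rightarrow> 'a" where
  "ev G f [] = \<one>\<^bsub>G\<^esub>"
| "ev G f ((a, b) # w) = (if b then f a else inv\<^bsub>G\<^esub> (f a)) \<otimes>\<^bsub>G\<^esub> ev G f w"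

lemma range_subsetD: "range f \<subseteq> A \<Longrightarrow> f a \<in> A" by auto

context group
begin

lemma pow_comm1: "x \<in> carrier G \<Longrightarrow> x \<otimes> x [^] (n::nat) = x [^] n \<otimes> x"
  by (metis nat_pow_Suc nat_pow_Suc2)

lemma ev_closed: "range f \<subseteq> carrier G \<Longrightarrow> ev G f w \<in> carrier G"
  by (induction w) (auto simp: range_subsetD)

lemma ev_append: "range f \<subseteq> carrier G \<Longrightarrow> ev G f (u @ v) = ev G f u \<otimes> ev G f v"
  by (induction u) (auto simp: m_assoc ev_closed range_subsetD)

lemma ev_pres:
  assumes f: "range f \<subseteq> carrier G" and R: "\<forall>r\<in>R. ev G f r = \<one>"
  shows "pres_rel R u v \<Longrightarrow> ev G f u = ev G f v"
proof (induction rule: pres_rel.induct)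
  case (cancel u a b v)
  have fa: "f a \<in> carrier G" using f by auto
  have "ev G f [(a, b), (a, \<not> b)] = \<one>"
    using fa by auto
  then show ?case using f fa by (simp add: ev_append ev_closed m_assoc[symmetric])
next
  case (relator r u v)
  then show ?case using f R by (simp add: ev_append ev_closed)
qed auto

lemma ev_rep_true: "f a \<in> carrier G \<Longrightarrow> ev G f (replicate n (a, True)) = f a [^] n"
proof (induction n)
  case (Suc n)
  then have "ev G f (replicate (Suc n) (a, True)) = f a \<otimes> f a [^] n" by simp
  also have "\<dots> = f a [^] Suc n" using Suc.prems by (simp only: pow_comm1 nat_pow_Suc)
  finally show ?case .
qed simp

lemma ev_rep_false: "f a \<in> carrier G \<Longrightarrow> ev G f (replicate n (a, False)) = inv (f a) [^] n"
proof (induction n)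
  case (Suc n)
  have "ev G f (replicate (Suc n) (a, False)) = inv (f a) \<otimes> ev G f (replicate n (a, False))"
    by (simp only: replicate_Suc ev.simps if_False)
  also have "\<dots> = inv (f a) \<otimes> inv (f a) [^] n" using Suc by (simp only:)
  also have "\<dots> = inv (f a) [^] Suc n" using Suc.prems pow_comm1[of "inv (f a)" n] inv_closed
    by (simp only: nat_pow_Suc)
  finally show ?case .
qed simp

lemma ev_pow_word: "range f \<subseteq> carrier G \<Longrightarrow> ev G f (pow_word a k) = f a [^] k"
proof -
  assume f: "range f \<subseteq> carrier G"
  have fa: "f a \<in> carrier G" using f by auto
  show ?thesis
  proof (cases "0 \<le> k")
    case True
    then have "pow_word a k = replicate (nat k) (a, True)" by (simp add: pow_word_def)
    moreover have "f a [^] k = f a [^] (nat k)" using True unfolding int_pow_def2 by simp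
    ultimately show ?thesis using ev_rep_true[of f a "nat k", OF fa] by (simp only:)
  next
    case False
    then have "pow_word a k = replicate (nat (-k)) (a, False)" by (simp add: pow_word_def)
    moreover have "f a [^] k = inv (f a [^] (nat (-k)))" using False unfolding int_pow_def2 by simp
    ultimately show ?thesis using ev_rep_false[of f a "nat (-k)", OF fa] nat_pow_inv[OF fa, of "nat (-k)"] by (simp only:)
  qed
qed

lemma ev_inv_word: "range f \<subseteq> carrier G \<Longrightarrow> ev G f (inv_word w) = inv (ev G f w)"
proof (induction w)
  case Nil
  then show ?case by (simp add: inv_word_def)
next
  case (Cons x w)
  obtain a b where x: "x = (a, b)" by force
  have fa: "f a \<in> carrier G" using Cons by auto
  have "inv_word (x # w) = inv_word w @ [(a, \<not> b)]" by (simp add: inv_word_def x)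
  then show ?case using Cons fa
    by (simp add: ev_append x ev_closed inv_mult_group)
qed

lemma ev_concat_replicate: "range f \<subseteq> carrier G \<Longrightarrow> ev G f (concat (replicate n w)) = ev G f w [^] n"
proof (induction n)
  case (Suc n)
  have "ev G f (concat (replicate (Suc n) w)) = ev G f w \<otimes> ev G f (concat (replicate n w))"
    using Suc.prems by (simp add: ev_append)
  also have "\<dots> = ev G f w \<otimes> ev G f w [^] n" using Suc by (simp only:)
  also have "\<dots> = ev G f w [^] Suc n" using pow_comm1[of "ev G f w" n] ev_closed[OF Suc.prems]
    by (simp only: nat_pow_Suc)
  finally show ?case .
qed simp

end

lemma ev_cong: "(\<And>a. a \<in> fst ` set w \<Longrightarrow> f a = g a) \<Longrightarrow> ev G f w = ev G g w"
  by (induction w) auto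

lemma hom_ev:
  assumes "group G" "group H" "h \<in> hom G H" "range f \<subseteq> carrier G"
  shows "h (ev G f w) = ev H (h \<circ> f) w"
proof -
  interpret gh: group_hom G H h using assms by (simp add: group_hom_def group_hom_axioms_def)
  show ?thesis using assms(4)
    by (induction w) (auto simp: group.ev_closed[OF assms(1)] range_subsetD)
qed

section \<open>Presented groups\<close>

lemma pres_rel_append_right: "pres_rel R u u' \<Longrightarrow> pres_rel R (u @ v) (u' @ v)"
proof (induction rule: pres_rel.induct)
  case (cancel x a b y)
  then show ?case using pres_rel.cancel[of R x a b "y @ v"] by simp
next
  case (relator r x y)
  then show ?case using pres_rel.relator[of r R x "y @ v"] by simp
qed (auto intro: pres_rel.intros)

lemma pres_rel_append_left: "pres_rel R u u' \<Longrightarrow> pres_rel R (v @ u) (v @ u')"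
proof (induction rule: pres_rel.induct)
  case (cancel x a b y)
  then show ?case using pres_rel.cancel[of R "v @ x" a b y] by simp
next
  case (relator r x y)
  then show ?case using pres_rel.relator[of r R "v @ x" y] by simp
qed (auto intro: pres_rel.intros)

lemma pres_rel_append: "pres_rel R u u' \<Longrightarrow> pres_rel R v v' \<Longrightarrow> pres_rel R (u @ v) (u' @ v')"
  by (meson pres_rel.trans pres_rel_append_left pres_rel_append_right)

lemma pres_rel_inv: "pres_rel R (inv_word u @ u) []"
proof (induction u)
  case Nil
  then show ?case by (simp add: inv_word_def pres_rel.refl)
next
  case (Cons x u)
  obtain a b where x: "x = (a, b)" by force
  have eq: "inv_word (x # u) @ x # u = inv_word u @ [(a, \<not> b), (a, \<not> \<not> b)] @ u"
    by (simp add: inv_word_def x)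
  have "pres_rel R (inv_word (x # u) @ x # u) (inv_word u @ u)"
    unfolding eq by (rule pres_rel.cancel)
  then show ?case using Cons pres_rel.trans by blast
qed

lemma words_on_append [simp]: "u @ v \<in> words_on S \<longleftrightarrow> u \<in> words_on S \<and> v \<in> words_on S"
  by (auto simp: words_on_def)

lemma words_on_Nil [simp]: "[] \<in> words_on S"
  by (auto simp: words_on_def)

lemma words_on_Cons [simp]: "x # v \<in> words_on S \<longleftrightarrow> fst x \<in> S \<and> v \<in> words_on S"
  by (auto simp: words_on_def)

lemma fst_inv_word: "fst ` set (inv_word u) = fst ` set u"
  by (induction u) (auto simp: inv_word_def)

lemma words_on_inv [simp]: "inv_word u \<in> words_on S \<longleftrightarrow> u \<in> words_on S"
  by (simp add: words_on_def fst_inv_word)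

definition cls :: "'g set \<Rightarrow> 'g word set \<Rightarrow> 'g word \<Rightarrow> 'g word set" where
  "cls S R w = {v \<in> words_on S. pres_rel R w v}"

lemma cls_eq:
  assumes "u \<in> words_on S" "v \<in> words_on S"
  shows "cls S R u = cls S R v \<longleftrightarrow> pres_rel R u v"
proof
  assume "cls S R u = cls S R v"
  then have "v \<in> cls S R u" using assms by (auto simp: cls_def intro: pres_rel.refl)
  then show "pres_rel R u v" by (simp add: cls_def)
next
  assume "pres_rel R u v"
  then show "cls S R u = cls S R v"
    by (auto simp: cls_def intro: pres_rel.trans pres_rel.sym)
qed

lemma carrier_pres: "carrier (presented_group S R) = cls S R ` words_on S"
  by (auto simp: presented_group_def quotient_def cls_def Image_def)

lemma one_pres: "\<one>\<^bsub>presented_group S R\<^esub> = cls S R []"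
  by (simp add: presented_group_def cls_def)

lemma mult_pres:
  assumes "u \<in> words_on S" "v \<in> words_on S"
  shows "cls S R u \<otimes>\<^bsub>presented_group S R\<^esub> cls S R v = cls S R (u @ v)"
proof -
  have "{w \<in> words_on S. \<exists>u'\<in>cls S R u. \<exists>v'\<in>cls S R v. pres_rel R (u' @ v') w} = cls S R (u @ v)"
  proof (rule equalityI; rule subsetI)
    fix w assume "w \<in> {w \<in> words_on S. \<exists>u'\<in>cls S R u. \<exists>v'\<in>cls S R v. pres_rel R (u' @ v') w}"
    then obtain u' v' where "w \<in> words_on S" "pres_rel R u u'" "pres_rel R v v'" "pres_rel R (u' @ v') w"
      by (auto simp: cls_def)
    then show "w \<in> cls S R (u @ v)"
      by (auto simp: cls_def intro: pres_rel.trans pres_rel_append)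
  next
    fix w assume "w \<in> cls S R (u @ v)"
    then show "w \<in> {w \<in> words_on S. \<exists>u'\<in>cls S R u. \<exists>v'\<in>cls S R v. pres_rel R (u' @ v') w}"
      using assms by (auto simp: cls_def intro!: bexI[of _ u] bexI[of _ v] pres_rel.refl)
  qed
  then show ?thesis by (simp add: presented_group_def)
qed

lemma group_pres: "group (presented_group S R)"
proof (rule groupI)
  fix x y assume "x \<in> carrier (presented_group S R)" "y \<in> carrier (presented_group S R)"
  then show "x \<otimes>\<^bsub>presented_group S R\<^esub> y \<in> carrier (presented_group S R)"
    by (auto simp: carrier_pres mult_pres)
next
  show "\<one>\<^bsub>presented_group S R\<^esub> \<in> carrier (presented_group S R)"
    by (auto simp: carrier_pres one_pres)
next
  fix x y z assume "x \<in> carrier (presented_group S R)" "y \<in> carrier (presented_group S R)"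
     "z \<in> carrier (presented_group S R)"
  then show "x \<otimes>\<^bsub>presented_group S R\<^esub> y \<otimes>\<^bsub>presented_group S R\<^esub> z =
           x \<otimes>\<^bsub>presented_group S R\<^esub> (y \<otimes>\<^bsub>presented_group S R\<^esub> z)"
    by (auto simp: carrier_pres mult_pres)
next
  fix x assume "x \<in> carrier (presented_group S R)"
  then show "\<one>\<^bsub>presented_group S R\<^esub> \<otimes>\<^bsub>presented_group S R\<^esub> x = x"
    by (auto simp: carrier_pres mult_pres one_pres)
next
  fix x assume "x \<in> carrier (presented_group S R)"
  then obtain u where u: "u \<in> words_on S" "x = cls S R u" by (auto simp: carrier_pres)
  have "cls S R (inv_word u) \<otimes>\<^bsub>presented_group S R\<^esub> x = \<one>\<^bsub>presented_group S R\<^esub>"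
    using u by (simp add: mult_pres one_pres cls_eq pres_rel_inv)
  moreover have "cls S R (inv_word u) \<in> carrier (presented_group S R)"
    using u by (simp add: carrier_pres)
  ultimately show "\<exists>y\<in>carrier (presented_group S R). y \<otimes>\<^bsub>presented_group S R\<^esub> x = \<one>\<^bsub>presented_group S R\<^esub>"
    by blast
qed

definition gen :: "'g set \<Rightarrow> 'g word set \<Rightarrow> 'g \<Rightarrow> 'g word set" where
  "gen S R a = (if a \<in> S then cls S R [(a, True)] else cls S R [])"

lemma gen_range: "range (gen S R) \<subseteq> carrier (presented_group S R)"
  by (auto simp: gen_def carrier_pres)

lemma ev_gen: "w \<in> words_on S \<Longrightarrow> ev (presented_group S R) (gen S R) w = cls S R w"
proof (induction w)
  case Nil
  then show ?case by (simp add: one_pres)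
next
  case (Cons x w)
  obtain a b where x: "x = (a, b)" by force
  interpret group "presented_group S R" by (rule group_pres)
  have a: "a \<in> S" "w \<in> words_on S" using Cons x by auto
  have g: "gen S R a = cls S R [(a, True)]" using a by (simp add: gen_def)
  have i: "inv\<^bsub>presented_group S R\<^esub> (cls S R [(a, True)]) = cls S R [(a, False)]"
  proof (rule inv_equality)
    have "pres_rel R ([] @ [(a, False), (a, \<not> False)] @ []) ([] @ [])" by (rule pres_rel.cancel)
    then show "cls S R [(a, False)] \<otimes>\<^bsub>presented_group S R\<^esub> cls S R [(a, True)] = \<one>\<^bsub>presented_group S R\<^esub>"
      using a by (simp add: mult_pres one_pres cls_eq)
  qed (use a in \<open>auto simp: carrier_pres\<close>)
  show ?case using Cons a g i
    by (cases b) (auto simp: x mult_pres)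
qed

lemma relator_one:
  "r \<in> R \<Longrightarrow> r \<in> words_on S \<Longrightarrow> ev (presented_group S R) (gen S R) r = \<one>\<^bsub>presented_group S R\<^esub>"
  using pres_rel.relator[of r R "[]" "[]"] by (simp add: ev_gen one_pres cls_eq)

definition lift :: "('a, 'b) monoid_scheme \<Rightarrow> ('g \<Rightarrow> 'a) \<Rightarrow> 'g word set \<Rightarrow> 'a" where
  "lift H f A = ev H f (SOME w. w \<in> A)"

lemma lift_cls:
  assumes "group H" "range f \<subseteq> carrier H" "\<forall>r\<in>R. ev H f r = \<one>\<^bsub>H\<^esub>" "u \<in> words_on S"
  shows "lift H f (cls S R u) = ev H f u"
proof -
  have "u \<in> cls S R u" using assms by (simp add: cls_def pres_rel.refl)
  then have "(SOME w. w \<in> cls S R u) \<in> cls S R u" by (rule someI)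
  then have "pres_rel R u (SOME w. w \<in> cls S R u)" by (simp add: cls_def)
  then show ?thesis using group.ev_pres[OF assms(1-3)] by (simp add: lift_def)
qed

lemma lift_hom:
  assumes "group H" "range f \<subseteq> carrier H" "\<forall>r\<in>R. ev H f r = \<one>\<^bsub>H\<^esub>"
  shows "lift H f \<in> hom (presented_group S R) H"
  unfolding hom_def
  using assms
  by (auto simp: carrier_pres mult_pres lift_cls group.ev_closed group.ev_append)

lemma pres_iso:
  assumes f1: "range f1 \<subseteq> carrier (presented_group S2 R2)"
      and r1: "\<forall>r\<in>R1. ev (presented_group S2 R2) f1 r = \<one>\<^bsub>presented_group S2 R2\<^esub>"
      and f2: "range f2 \<subseteq> carrier (presented_group S1 R1)"
      and r2: "\<forall>r\<in>R2. ev (presented_group S1 R1) f2 r = \<one>\<^bsub>presented_group S1 R1\<^esub>"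
      and rt1: "\<And>a. a \<in> S1 \<Longrightarrow> lift (presented_group S1 R1) f2 (f1 a) = gen S1 R1 a"
      and rt2: "\<And>a. a \<in> S2 \<Longrightarrow> lift (presented_group S2 R2) f1 (f2 a) = gen S2 R2 a"
  shows "presented_group S1 R1 \<cong> presented_group S2 R2"
proof -
  let ?P1 = "presented_group S1 R1" and ?P2 = "presented_group S2 R2"
  let ?h = "lift ?P2 f1" and ?k = "lift ?P1 f2"
  have G1: "group ?P1" and G2: "group ?P2" by (rule group_pres)+
  have h: "?h \<in> hom ?P1 ?P2" by (rule lift_hom[OF G2 f1 r1])
  have k: "?k \<in> hom ?P2 ?P1" by (rule lift_hom[OF G1 f2 r2])
  have kh: "?k (?h A) = A" if A: "A \<in> carrier ?P1" for A
  proof -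
    obtain w where w: "w \<in> words_on S1" "A = cls S1 R1 w" using A unfolding carrier_pres by blast
    have "?k (?h A) = ?k (ev ?P2 f1 w)" using w lift_cls[OF G2 f1 r1] by simp
    also have "\<dots> = ev ?P1 (?k \<circ> f1) w" by (rule hom_ev[OF G2 G1 k f1])
    also have "\<dots> = ev ?P1 (gen S1 R1) w"
      by (rule ev_cong) (use w rt1 in \<open>auto simp: words_on_def\<close>)
    also have "\<dots> = A" using w ev_gen by simp
    finally show ?thesis .
  qed
  have hk: "?h (?k B) = B" if B: "B \<in> carrier ?P2" for B
  proof -
    obtain w where w: "w \<in> words_on S2" "B = cls S2 R2 w" using B unfolding carrier_pres by blast
    have "?h (?k B) = ?h (ev ?P1 f2 w)" using w lift_cls[OF G1 f2 r2] by simp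
    also have "\<dots> = ev ?P2 (?h \<circ> f2) w" by (rule hom_ev[OF G1 G2 h f2])
    also have "\<dots> = ev ?P2 (gen S2 R2) w"
      by (rule ev_cong) (use w rt2 in \<open>auto simp: words_on_def\<close>)
    also have "\<dots> = B" using w ev_gen by simp
    finally show ?thesis .
  qed
  have "bij_betw ?h (carrier ?P1) (carrier ?P2)"
    by (rule bij_betw_byWitness[where f' = ?k]) (use kh hk h k in \<open>auto simp: hom_def\<close>)
  then have "?h \<in> iso ?P1 ?P2" using h by (simp add: iso_def)
  then show ?thesis by (rule is_isoI)
qed




definition ppL :: "nat \<Rightarrow> nat \<Rightarrow> nat \<Rightarrow> nat list" where
"ppL d r v = (if v = 0 then [0, 1] else if v \<le> d then [v - 1, v, v + 1]
  else if v = d + 1 then [d, d + 1, d + 2] @ (if 2 \<le> r then [d + 3] else [])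
  else if v = d + 2 then [d + 1, d + 2]
  else [if v = d + 3 then d + 1 else v - 1, v] @ (if v < d + r + 1 then [v + 1] else []))"

lemma ppL_set:
  assumes "2 \<le> d" "1 \<le> r" "v < pp_nverts d r"
  shows "{v} \<union> {u. u < pp_nverts d r \<and> pp_adj d r v u} = set (ppL d r v)"
  using assms unfolding ppL_def pp_adj_def pp_edge_def pp_nverts_def
  by (auto split: if_splits)

lemma ppL_sorted:
  assumes "2 \<le> d" "1 \<le> r" "v < pp_nverts d r"
  shows "sorted_wrt (<) (ppL d r v)"
  using assms unfolding ppL_def pp_nverts_def
  by auto

lemma vertex_relator_pp:
  assumes "2 \<le> d" "1 \<le> r" "v < pp_nverts d r"
  shows "vertex_relator (pp_nverts d r) wt (pp_adj d r) v =
     concat (map (\<lambda>u. if u = v then pow_word v (wt v) else [(u, True)]) (ppL d r v))"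
proof -
  have s: "sorted_wrt (<) (ppL d r v)" by (rule ppL_sorted[OF assms])
  have "sorted_list_of_set ({v} \<union> {u. u < pp_nverts d r \<and> pp_adj d r v u}) = ppL d r v"
    unfolding ppL_set[OF assms] sorted_list_of_set_sort_remdups
    using s by (simp add: strict_sorted_iff distinct_remdups_id sorted_sort_id)
  then show ?thesis by (simp add: vertex_relator_def)
qed




context group begin

lemma pm: "x \<in> carrier G \<Longrightarrow> x [^] (a::int) \<otimes> x [^] (b::int) = x [^] (a + b)"
  by (simp add: int_pow_mult)

lemma pm3: "x \<in> carrier G \<Longrightarrow> c \<in> carrier G \<Longrightarrow> x [^] (a::int) \<otimes> (x [^] (b::int) \<otimes> c) = x [^] (a + b) \<otimes> c"
  by (simp add: int_pow_mult m_assoc)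

lemma inv_cancel_l: "a \<in> carrier G \<Longrightarrow> c \<in> carrier G \<Longrightarrow> a \<otimes> (inv a \<otimes> c) = c"
  by (simp add: m_assoc[symmetric])

lemma conj_pow: "a \<in> carrier G \<Longrightarrow> b \<in> carrier G \<Longrightarrow>
   (inv a \<otimes> b \<otimes> a) [^] (n::nat) = inv a \<otimes> b [^] n \<otimes> a"
proof (induction n)
  case 0 then show ?case by simp
next
  case (Suc n)
  have "(inv a \<otimes> b \<otimes> a) [^] Suc n = (inv a \<otimes> b [^] n \<otimes> a) \<otimes> (inv a \<otimes> b \<otimes> a)"
    using Suc by simp
  also have "\<dots> = inv a \<otimes> (b [^] n \<otimes> (a \<otimes> (inv a \<otimes> (b \<otimes> a))))"
    using Suc.prems by (simp add: m_assoc)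
  also have "a \<otimes> (inv a \<otimes> (b \<otimes> a)) = b \<otimes> a"
    using Suc.prems by (simp add: inv_cancel_l)
  also have "inv a \<otimes> (b [^] n \<otimes> (b \<otimes> a)) = inv a \<otimes> b [^] Suc n \<otimes> a"
    using Suc.prems by (simp add: m_assoc)
  finally show ?case .
qed

end

definition Fimg :: "('a, 'b) monoid_scheme \<Rightarrow> nat \<Rightarrow> nat \<Rightarrow> 'a \<Rightarrow> 'a \<Rightarrow> nat \<Rightarrow> 'a" where
"Fimg G d r x y v = (if v \<le> d + 1 then y [^]\<^bsub>G\<^esub> (int v - 1) else if v = d + 2 then y \<otimes>\<^bsub>G\<^esub> x
   else if v \<le> d + r + 1 then x [^]\<^bsub>G\<^esub> (int d + int r + 2 - int v) else \<one>\<^bsub>G\<^esub>)"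

lemma (in group) Fimg_closed: "x \<in> carrier G \<Longrightarrow> y \<in> carrier G \<Longrightarrow> range (Fimg G d r x y) \<subseteq> carrier G"
  by (auto simp: Fimg_def)

lemma (in group) ev_single: "range f \<subseteq> carrier G \<Longrightarrow> ev G f [(u, True)] = f u"
  by (simp add: range_subsetD)

lemma (in group) B_rel:
  assumes d: "2 \<le> d" and r: "1 \<le> r" and v: "v < pp_nverts d r"
    and x: "x \<in> carrier G" and y: "y \<in> carrier G"
    and hx: "x [^] (int r) = y [^] (int d)" and hy: "(x \<otimes> y) [^] (int d) = y [^] (int d)"
  shows "ev G (Fimg G d r x y) (vertex_relator (pp_nverts d r) (pp_weight d 1 r) (pp_adj d r) v) = \<one>"
proof -
  let ?F = "Fimg G d r x y"
  have F: "range ?F \<subseteq> carrier G" by (rule Fimg_closed[OF x y])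
  have Fc: "\<And>u. ?F u \<in> carrier G" using F by auto
  note ev_simps = ev_append[OF F] ev_pow_word[OF F] ev_single[OF F] Fc
  note vr = vertex_relator_pp[OF d r v]
  have v': "v \<le> d + r + 1" using v by (simp add: pp_nverts_def)
  consider "v = 0" | "1 \<le> v \<and> v \<le> d" | "v = d + 1" | "v = d + 2" | "d + 3 \<le> v" by linarith
  then show ?thesis
  proof cases
    case 1
    then show ?thesis using vr by (simp add: ppL_def ev_simps pp_weight_def Fimg_def)
  next
    case 2
    have L: "ppL d r v = [v - 1, v, v + 1]" using 2 by (simp add: ppL_def)
    have w: "pp_weight d 1 r v = (if v = 1 then -1 else -2)" using 2 by (simp add: pp_weight_def)
    have e: "ev G ?F (vertex_relator (pp_nverts d r) (pp_weight d 1 r) (pp_adj d r) v)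
       = ?F (v - 1) \<otimes> (?F v [^] pp_weight d 1 r v \<otimes> ?F (v + 1))"
    proof -
      have ne: "v - 1 \<noteq> v" "v + 1 \<noteq> v" using 2 by auto
      have "vertex_relator (pp_nverts d r) (pp_weight d 1 r) (pp_adj d r) v
         = [(v - 1, True)] @ pow_word v (pp_weight d 1 r v) @ [(v + 1, True)]"
        using ne by (simp add: vr L)
      then show ?thesis by (simp add: ev_simps)
    qed
    have "?F (v - 1) \<otimes> (?F v [^] pp_weight d 1 r v \<otimes> ?F (v + 1))
        = y [^] (int v - 2) \<otimes> (y [^] ((int v - 1) * pp_weight d 1 r v) \<otimes> y [^] (int v))"
    proof -
      have le: "v - 1 \<le> d + 1" using 2 by arith
      have a: "?F (v - 1) = y [^] (int v - 2)" using 2 le by (simp add: Fimg_def of_nat_diff)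
      have b: "?F v = y [^] (int v - 1)" using 2 by (simp add: Fimg_def)
      have c: "?F (v + 1) = y [^] (int v)" using 2 by (simp add: Fimg_def)
      show ?thesis using y by (simp only: a b c int_pow_pow)
    qed
    also have "\<dots> = y [^] ((int v - 2) + ((int v - 1) * pp_weight d 1 r v) + int v)"
      using y by (simp add: pm)
    also have "(int v - 2) + ((int v - 1) * pp_weight d 1 r v) + int v = 0"
      using 2 w by (auto simp: algebra_simps)
    finally show ?thesis using e by simp
  next
    case 3
    have L: "ppL d r v = [d, d + 1, d + 2] @ (if 2 \<le> r then [d + 3] else [])" using 3 by (simp add: ppL_def)
    have w: "pp_weight d 1 r v = -2" using 3 d by (simp add: pp_weight_def)
    have E: "ev G ?F (if 2 \<le> r then [(d + 3, True)] else []) = x [^] (int r - 1)"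
    proof (cases "2 \<le> r")
      case True then show ?thesis using x by (simp add: ev_simps Fimg_def)
    next
      case False then have "r = 1" using r by simp
      then show ?thesis by simp
    qed
    have e: "ev G ?F (vertex_relator (pp_nverts d r) (pp_weight d 1 r) (pp_adj d r) v)
       = ?F d \<otimes> (?F (d + 1) [^] (-2::int) \<otimes> (?F (d + 2) \<otimes> x [^] (int r - 1)))"
    proof -
      have "vertex_relator (pp_nverts d r) (pp_weight d 1 r) (pp_adj d r) v
         = [(d, True)] @ pow_word (d + 1) (-2) @ [(d + 2, True)] @ (if 2 \<le> r then [(d + 3, True)] else [])"
        unfolding vr L w using 3 by simp
      then show ?thesis using E by (simp add: ev_simps)
    qed
    have "?F d \<otimes> (?F (d + 1) [^] (-2::int) \<otimes> (?F (d + 2) \<otimes> x [^] (int r - 1)))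
        = y [^] (int d - 1) \<otimes> (y [^] (- 2 * int d) \<otimes> (y [^] (1::int) \<otimes> (x [^] (1::int) \<otimes> x [^] (int r - 1))))"
      using d x y by (simp add: Fimg_def int_pow_pow m_assoc mult.commute)
    also have "\<dots> = y [^] (int d - 1 + (- 2 * int d + 1)) \<otimes> x [^] (1 + (int r - 1))"
      using x y by (simp only: pm pm3 int_pow_closed)
    also have "\<dots> = y [^] (- int d) \<otimes> x [^] (int r)"
      by simp
    also have "\<dots> = \<one>" using y by (simp add: hx int_pow_neg)
    finally show ?thesis using e by simp
  next
    case 4
    have L: "ppL d r v = [d + 1, d + 2]" using 4 by (simp add: ppL_def)
    have w: "pp_weight d 1 r v = - int d" using 4 d by (simp add: pp_weight_def)
    have e: "ev G ?F (vertex_relator (pp_nverts d r) (pp_weight d 1 r) (pp_adj d r) v)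
       = ?F (d + 1) \<otimes> ?F (d + 2) [^] (- int d)"
      unfolding vr L w using 4 x y by (simp add: ev_simps Fimg_def)
    have yx: "(y \<otimes> x) [^] (int d) = y [^] (int d)"
    proof -
      have c: "y \<otimes> x = inv x \<otimes> (x \<otimes> y) \<otimes> x" using x y by (simp add: m_assoc[symmetric])
      have "(y \<otimes> x) [^] (int d) = (y \<otimes> x) [^] d" by (simp add: int_pow_int)
      also have "\<dots> = (inv x \<otimes> (x \<otimes> y) \<otimes> x) [^] d" by (simp only: c)
      also have "\<dots> = inv x \<otimes> (x \<otimes> y) [^] d \<otimes> x"
        using x y by (simp add: conj_pow)
      finally have "(y \<otimes> x) [^] (int d) = inv x \<otimes> (x \<otimes> y) [^] d \<otimes> x" .
      also have "\<dots> = inv x \<otimes> x [^] (int r) \<otimes> x"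
        using hx hy by (simp add: int_pow_int)
      also have "\<dots> = inv x \<otimes> (x [^] (int r) \<otimes> x)"
        using x by (simp add: m_assoc)
      also have "x [^] (int r) \<otimes> x = x \<otimes> x [^] (int r)"
        using x by (simp add: int_pow_int pow_comm1)
      also have "inv x \<otimes> (x \<otimes> x [^] (int r)) = x [^] (int r)"
        using x by (simp add: m_assoc[symmetric])
      finally show ?thesis using hx by simp
    qed
    show ?thesis using e yx x y by (simp add: Fimg_def int_pow_neg)
  next
    case 5
    have rr: "2 \<le> r" using 5 v' by linarith
    let ?E = "x [^] (int d + int r + 1 - int v)"
    have L: "ppL d r v = [if v = d + 3 then d + 1 else v - 1, v] @ (if v < d + r + 1 then [v + 1] else [])"
      using 5 by (simp add: ppL_def)
    have w: "pp_weight d 1 r v = - 2" using 5 d by (simp add: pp_weight_def)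
    have E: "ev G ?F (if v < d + r + 1 then [(v + 1, True)] else []) = ?E"
    proof (cases "v < d + r + 1")
      case True
      have "?F (v + 1) = ?E" using True 5 by (simp add: Fimg_def algebra_simps)
      then show ?thesis using True x by (simp add: ev_simps)
    next
      case False
      then have "v = d + r + 1" using v' by simp
      then show ?thesis by simp
    qed
    have P: "?F (if v = d + 3 then d + 1 else v - 1) = x [^] (int d + int r + 3 - int v)"
    proof (cases "v = d + 3")
      case True then show ?thesis using hx by (simp add: Fimg_def)
    next
      case False
      then have a: "\<not> v - 1 \<le> d + 1" "v - 1 \<noteq> d + 2" "v - 1 \<le> d + r + 1" using 5 v' by arith+
      have b: "int (v - 1) = int v - 1" using 5 by (simp add: of_nat_diff)
      have "?F (v - 1) = x [^] (int d + int r + 3 - int v)"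
        unfolding Fimg_def using a b by (simp add: algebra_simps)
      then show ?thesis using False by simp
    qed
    have e: "ev G ?F (vertex_relator (pp_nverts d r) (pp_weight d 1 r) (pp_adj d r) v)
       = x [^] (int d + int r + 3 - int v) \<otimes> (?F v [^] (-2::int) \<otimes> ?E)"
    proof -
      have "vertex_relator (pp_nverts d r) (pp_weight d 1 r) (pp_adj d r) v
         = [(if v = d + 3 then d + 1 else v - 1, True)] @ pow_word v (-2) @ (if v < d + r + 1 then [(v + 1, True)] else [])"
      proof -
        have ne: "(if v = d + 3 then d + 1 else v - 1) \<noteq> v" "v + 1 \<noteq> v" using 5 by auto
        show ?thesis unfolding vr L w using ne by (simp del: One_nat_def)
      qed
      then show ?thesis using E P by (simp add: ev_simps)
    qed
    have "x [^] (int d + int r + 3 - int v) \<otimes> (?F v [^] (-2::int) \<otimes> ?E)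
       = x [^] (int d + int r + 3 - int v) \<otimes> (x [^] ((int d + int r + 2 - int v) * (-2)) \<otimes> ?E)"
      using 5 v' x by (simp add: Fimg_def int_pow_pow)
    also have "\<dots> = x [^] ((int d + int r + 3 - int v) + (int d + int r + 2 - int v) * (-2) + (int d + int r + 1 - int v))"
      using x by (simp add: pm)
    also have "(int d + int r + 3 - int v) + (int d + int r + 2 - int v) * (-2) + (int d + int r + 1 - int v) = 0"
      by (simp add: algebra_simps)
    finally show ?thesis using e by simp
  qed
qed




definition R1 :: "nat \<Rightarrow> nat \<Rightarrow> nat word set" where
 "R1 d r = {vertex_relator (pp_nverts d r) (pp_weight d 1 r) (pp_adj d r) v | v. v < pp_nverts d r} \<union>
   {commutator_word u v | u v. u < pp_nverts d r \<and> v < pp_nverts d r \<and> pp_adj d r u v}"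

lemma pi1_eq: "pi1_inf_pseudo_plane d 1 r = presented_group {..<pp_nverts d r} (R1 d r)"
  by (simp add: pi1_inf_pseudo_plane_def pi1_graph_def R1_def)

context group begin

lemma pow_comm_int: "x \<in> carrier G \<Longrightarrow> x [^] (a::int) \<otimes> x [^] (b::int) = x [^] b \<otimes> x [^] a"
  by (simp add: pm add.commute)

lemma ev_comm: "range f \<subseteq> carrier G \<Longrightarrow> f a \<otimes> f b = f b \<otimes> f a \<Longrightarrow> ev G f (commutator_word a b) = \<one>"
proof -
  assume f: "range f \<subseteq> carrier G" and c: "f a \<otimes> f b = f b \<otimes> f a"
  have fa: "f a \<in> carrier G" "f b \<in> carrier G" using f by auto
  have "ev G f (commutator_word a b) = f a \<otimes> f b \<otimes> inv (f b \<otimes> f a)"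
    using fa by (simp add: commutator_word_def m_assoc inv_mult_group)
  then show ?thesis using c fa by simp
qed

lemma B_comm:
  assumes d: "2 \<le> d" and r: "1 \<le> r"
    and x: "x \<in> carrier G" and y: "y \<in> carrier G"
    and hx: "x [^] (int r) = y [^] (int d)"
    and e: "pp_edge d r u v"
  shows "Fimg G d r x y u \<otimes> Fimg G d r x y v = Fimg G d r x y v \<otimes> Fimg G d r x y u"
proof -
  have zy: "y [^] (int d) \<otimes> y = y \<otimes> y [^] (int d)"
    using pow_comm_int[OF y, of "int d" 1] y by simp
  have zx: "y [^] (int d) \<otimes> x = x \<otimes> y [^] (int d)"
    using pow_comm_int[OF x, of "int r" 1] x hx by simp
  have zxk: "y [^] (int d) \<otimes> x [^] (k::int) = x [^] k \<otimes> y [^] (int d)" for k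
    using pow_comm_int[OF x, of "int r" k] hx by simp
  consider "u < d + 1" "v = u + 1" | "u = d + 1" "v = d + 2" | "2 \<le> r" "u = d + 1" "v = d + 3"
    | "d + 3 \<le> u" "u < d + r + 1" "v = u + 1"
    using e unfolding pp_edge_def by blast
  then show ?thesis
  proof cases
    case 1 then show ?thesis using y by (simp add: Fimg_def pow_comm_int)
  next
    case 2
    have "y [^] (int d) \<otimes> (y \<otimes> x) = (y \<otimes> x) \<otimes> y [^] (int d)"
      using x y zx zy by (metis m_assoc int_pow_closed)
    then show ?thesis using 2 by (simp add: Fimg_def)
  next
    case 3
    then show ?thesis using zxk by (simp add: Fimg_def)
  next
    case 4
    then show ?thesis using x by (simp add: Fimg_def pow_comm_int)
  qed
qed

lemma B_all:
  assumes d: "2 \<le> d" and r: "1 \<le> r"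
    and x: "x \<in> carrier G" and y: "y \<in> carrier G"
    and hx: "x [^] (int r) = y [^] (int d)" and hy: "(x \<otimes> y) [^] (int d) = y [^] (int d)"
  shows "\<forall>w\<in>R1 d r. ev G (Fimg G d r x y) w = \<one>"
proof
  fix w assume "w \<in> R1 d r"
  then consider v where "v < pp_nverts d r" "w = vertex_relator (pp_nverts d r) (pp_weight d 1 r) (pp_adj d r) v"
    | u v where "pp_adj d r u v" "w = commutator_word u v"
    unfolding R1_def by blast
  then show "ev G (Fimg G d r x y) w = \<one>"
  proof cases
    case 1 then show ?thesis using B_rel[OF d r _ x y hx hy] by simp
  next
    case 2
    have "Fimg G d r x y u \<otimes> Fimg G d r x y v = Fimg G d r x y v \<otimes> Fimg G d r x y u"
      using 2(1) B_comm[OF d r x y hx] unfolding pp_adj_def by metis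
    then show ?thesis using 2(2) ev_comm[OF Fimg_closed[OF x y]] by simp
  qed
qed

end



context group begin

lemma vr_ev:
  assumes d: "2 \<le> d" and r: "1 \<le> r" and v: "v < pp_nverts d r" and g: "range g \<subseteq> carrier G"
  shows "ev G g (vertex_relator (pp_nverts d r) (pp_weight d 1 r) (pp_adj d r) v) =
   (if v = 0 then g 1
    else if v \<le> d then g (v - 1) \<otimes> (g v [^] (if v = 1 then -1 else -2::int) \<otimes> g (v + 1))
    else if v = d + 1 then g d \<otimes> (g (d + 1) [^] (-2::int) \<otimes> (g (d + 2) \<otimes> (if 2 \<le> r then g (d + 3) else \<one>)))
    else if v = d + 2 then g (d + 1) \<otimes> g (d + 2) [^] (- int d)
    else g (if v = d + 3 then d + 1 else v - 1) \<otimes> (g v [^] (-2::int) \<otimes> (if v < d + r + 1 then g (v + 1) else \<one>)))"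
proof -
  have gc: "\<And>u. g u \<in> carrier G" using g by auto
  note ev_simps = ev_append[OF g] ev_pow_word[OF g] ev_single[OF g] gc
  note vr = vertex_relator_pp[OF d r v]
  have v': "v \<le> d + r + 1" using v by (simp add: pp_nverts_def)
  consider "v = 0" | "1 \<le> v \<and> v \<le> d" | "v = d + 1" | "v = d + 2" | "d + 3 \<le> v" by linarith
  then show ?thesis
  proof cases
    case 1
    then show ?thesis using vr gc by (simp add: ppL_def ev_simps pp_weight_def)
  next
    case 2
    have L: "ppL d r v = [v - 1, v, v + 1]" using 2 by (simp add: ppL_def)
    have w: "pp_weight d 1 r v = (if v = 1 then -1 else -2)" using 2 by (simp add: pp_weight_def)
    have ne: "v - 1 \<noteq> v" "v + 1 \<noteq> v" using 2 by auto
    have "vertex_relator (pp_nverts d r) (pp_weight d 1 r) (pp_adj d r) v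
         = [(v - 1, True)] @ pow_word v (pp_weight d 1 r v) @ [(v + 1, True)]"
      using ne by (simp add: vr L)
    then show ?thesis using 2 w by (simp add: ev_simps)
  next
    case 3
    have L: "ppL d r v = [d, d + 1, d + 2] @ (if 2 \<le> r then [d + 3] else [])" using 3 by (simp add: ppL_def)
    have w: "pp_weight d 1 r v = -2" using 3 d by (simp add: pp_weight_def)
    have E: "ev G g (if 2 \<le> r then [(d + 3, True)] else []) = (if 2 \<le> r then g (d + 3) else \<one>)"
      by (simp add: ev_simps)
    have "vertex_relator (pp_nverts d r) (pp_weight d 1 r) (pp_adj d r) v
         = [(d, True)] @ pow_word (d + 1) (-2) @ [(d + 2, True)] @ (if 2 \<le> r then [(d + 3, True)] else [])"
      unfolding vr L w using 3 by simp
    then show ?thesis using E 3 d by (simp add: ev_simps)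
  next
    case 4
    have L: "ppL d r v = [d + 1, d + 2]" using 4 by (simp add: ppL_def)
    have w: "pp_weight d 1 r v = - int d" using 4 d by (simp add: pp_weight_def)
    show ?thesis unfolding vr L w using 4 d by (simp add: ev_simps)
  next
    case 5
    have L: "ppL d r v = [if v = d + 3 then d + 1 else v - 1, v] @ (if v < d + r + 1 then [v + 1] else [])"
      using 5 by (simp add: ppL_def)
    have w: "pp_weight d 1 r v = - 2" using 5 d by (simp add: pp_weight_def)
    have E: "ev G g (if v < d + r + 1 then [(v + 1, True)] else []) = (if v < d + r + 1 then g (v + 1) else \<one>)"
      by (simp add: ev_simps)
    have ne: "(if v = d + 3 then d + 1 else v - 1) \<noteq> v" "v + 1 \<noteq> v" using 5 by auto
    have "vertex_relator (pp_nverts d r) (pp_weight d 1 r) (pp_adj d r) v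
         = [(if v = d + 3 then d + 1 else v - 1, True)] @ pow_word v (-2) @ (if v < d + r + 1 then [(v + 1, True)] else [])"
      unfolding vr L w using ne by (simp del: One_nat_def)
    then show ?thesis using E 5 d by (simp add: ev_simps)
  qed
qed

end



context group begin

lemma solve_r: "a \<in> carrier G \<Longrightarrow> b \<in> carrier G \<Longrightarrow> c \<in> carrier G \<Longrightarrow> a \<otimes> (b \<otimes> c) = \<one> \<Longrightarrow> c = inv b \<otimes> inv a"
proof -
  assume a: "a \<in> carrier G" and b: "b \<in> carrier G" and c: "c \<in> carrier G" and e: "a \<otimes> (b \<otimes> c) = \<one>"
  have "(a \<otimes> b) \<otimes> c = \<one>" using a b c e by (simp add: m_assoc)
  then have "c \<otimes> (a \<otimes> b) = \<one>" using a b c by (simp add: inv_comm)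
  then have "inv (a \<otimes> b) = c" using a b c by (simp add: inv_equality)
  then show ?thesis using a b by (simp add: inv_mult_group)
qed

lemma solve_l: "a \<in> carrier G \<Longrightarrow> b \<in> carrier G \<Longrightarrow> c \<in> carrier G \<Longrightarrow> a \<otimes> (b \<otimes> c) = \<one> \<Longrightarrow> a = inv c \<otimes> inv b"
proof -
  assume a: "a \<in> carrier G" and b: "b \<in> carrier G" and c: "c \<in> carrier G" and e: "a \<otimes> (b \<otimes> c) = \<one>"
  have "inv (b \<otimes> c) = a" using a b c e by (simp add: inv_equality)
  then show ?thesis using b c by (simp add: inv_mult_group)
qed

lemma solve2: "a \<in> carrier G \<Longrightarrow> b \<in> carrier G \<Longrightarrow> a \<otimes> b = \<one> \<Longrightarrow> a = inv b"
  by (simp add: inv_equality)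

end

locale gchain = group G for G (structure) +
  fixes d r :: nat and g :: "nat \<Rightarrow> 'a"
  assumes d: "2 \<le> d" and r: "1 \<le> r" and g: "range g \<subseteq> carrier G"
    and H: "\<forall>w\<in>R1 d r. ev G g w = \<one>"
begin

lemma gc [simp]: "g u \<in> carrier G" using g by auto

lemma rel:
  assumes v: "v < pp_nverts d r"
  shows "(if v = 0 then g 1
    else if v \<le> d then g (v - 1) \<otimes> (g v [^] (if v = 1 then -1 else -2::int) \<otimes> g (v + 1))
    else if v = d + 1 then g d \<otimes> (g (d + 1) [^] (-2::int) \<otimes> (g (d + 2) \<otimes> (if 2 \<le> r then g (d + 3) else \<one>)))
    else if v = d + 2 then g (d + 1) \<otimes> g (d + 2) [^] (- int d)
    else g (if v = d + 3 then d + 1 else v - 1) \<otimes> (g v [^] (-2::int) \<otimes> (if v < d + r + 1 then g (v + 1) else \<one>))) = \<one>"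
proof -
  have "vertex_relator (pp_nverts d r) (pp_weight d 1 r) (pp_adj d r) v \<in> R1 d r"
    using v unfolding R1_def by blast
  then show ?thesis using H vr_ev[OF d r v g] by simp
qed

lemma N: "pp_nverts d r = d + r + 2" by (simp add: pp_nverts_def)

lemma g1: "g 1 = \<one>"
  using rel[of 0] by (simp add: N)

lemma g0: "g 0 = g 2 [^] (-1::int)"
proof -
  have "g 0 \<otimes> (g 1 [^] (-1::int) \<otimes> g 2) = \<one>" using rel[of 1] d by (simp add: N numeral_2_eq_2)
  then have "g 0 \<otimes> g 2 = \<one>" by (simp only: g1 int_pow_one l_one gc)
  then show ?thesis by (simp add: solve2 int_pow_neg)
qed

lemma low_step:
  assumes "1 \<le> k" "k \<le> d + 1"
  shows "g (k - 1) = g 2 [^] (int k - 2) \<and> g k = g 2 [^] (int k - 1)"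
  using assms
proof (induction k)
  case 0 then show ?case by simp
next
  case (Suc k)
  show ?case
  proof (cases "k = 0")
    case True then show ?thesis using g0 g1 by simp
  next
    case False
    then have k: "1 \<le> k" "k \<le> d" using Suc.prems by auto
    have IH: "g (k - 1) = g 2 [^] (int k - 2)" "g k = g 2 [^] (int k - 1)" using Suc.IH k by auto
    let ?w = "(if k = 1 then -1 else -2::int)"
    have e: "g (k - 1) \<otimes> (g k [^] ?w \<otimes> g (k + 1)) = \<one>" using rel[of k] k by (simp add: N)
    have "g (k + 1) = inv (g k [^] ?w) \<otimes> inv (g (k - 1))" using solve_r[OF _ _ _ e] by simp
    also have "\<dots> = inv ((g 2 [^] (int k - 1)) [^] ?w) \<otimes> inv (g 2 [^] (int k - 2))"
      unfolding IH ..
    also have "\<dots> = g 2 [^] (- ((int k - 1) * ?w)) \<otimes> g 2 [^] (- (int k - 2))"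
      by (simp only: int_pow_pow gc int_pow_neg[symmetric])
    also have "\<dots> = g 2 [^] (- ((int k - 1) * ?w) + - (int k - 2))"
      by (simp only: pm gc)
    also have "- ((int k - 1) * ?w) + - (int k - 2) = int k" using k by auto
    finally show ?thesis using IH by simp
  qed
qed

lemma low: "i \<le> d + 1 \<Longrightarrow> g i = g 2 [^] (int i - 1)"
  using low_step[of i] g0 by (cases "i = 0") auto

lemma ud: "g (d + 2) [^] (int d) = g 2 [^] (int d)"
proof -
  have "g (d + 1) \<otimes> g (d + 2) [^] (- int d) = \<one>" using rel[of "d + 2"] d r by (simp add: N)
  then have "g (d + 1) = inv (g (d + 2) [^] (- int d))" by (simp add: solve2)
  then show ?thesis using low[of "d + 1"] by (simp add: int_pow_neg)
qed

end



context group begin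
lemma conj_self: "a \<in> carrier G \<Longrightarrow> inv a \<otimes> a [^] (k::int) \<otimes> a = a [^] k"
proof -
  assume a: "a \<in> carrier G"
  have "inv a \<otimes> a [^] k \<otimes> a = inv a \<otimes> (a [^] k \<otimes> a [^] (1::int))" using a by (simp add: m_assoc)
  also have "a [^] k \<otimes> a [^] (1::int) = a [^] (1::int) \<otimes> a [^] k" using a by (rule pow_comm_int)
  also have "inv a \<otimes> (a [^] (1::int) \<otimes> a [^] k) = a [^] k" using a by (simp add: m_assoc[symmetric])
  finally show ?thesis .
qed
end

context gchain begin

abbreviation "t \<equiv> g 2"
abbreviation "u \<equiv> g (d + 2)"
abbreviation "s \<equiv> g (d + r + 1)"
definition "cc m = g (if m \<le> r - 2 then d + r + 1 - m else d + 1)"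

lemma gd: "g d = t [^] (int d - 1)" using low[of d] by simp
lemma gd1: "g (d + 1) = t [^] (int d)" using low[of "d + 1"] by simp

lemma r1_u: "r = 1 \<Longrightarrow> inv t \<otimes> u = t [^] (int d)"
proof -
  assume r1: "r = 1"
  have e: "g d \<otimes> (g (d + 1) [^] (-2::int) \<otimes> u) = \<one>" using rel[of "d + 1"] r1 by (simp add: pp_nverts_def)
  have "u = inv (g (d + 1) [^] (-2::int)) \<otimes> inv (g d)" using solve_r[OF _ _ _ e] by simp
  also have "\<dots> = t [^] (2 * int d) \<otimes> t [^] (1 - int d)"
    unfolding gd gd1 by (simp add: int_pow_pow int_pow_neg[symmetric] mult.commute)
  also have "\<dots> = t [^] (int d + 1)" by (simp add: pm)
  finally have "inv t \<otimes> u = t [^] (-1::int) \<otimes> t [^] (int d + 1)" by (simp add: int_pow_neg)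
  also have "\<dots> = t [^] (int d)" by (simp add: pm)
  finally show ?thesis .
qed

lemma chain:
  assumes r2: "2 \<le> r"
  shows "m + 1 \<le> r - 1 \<Longrightarrow> cc m = s [^] (int m + 1) \<and> cc (m + 1) = s [^] (int m + 2)"
proof (induction m)
  case 0
  have c0: "cc 0 = s" using r2 by (simp add: cc_def)
  let ?v = "d + r + 1"
  have i1: "(if ?v = d + 3 then d + 1 else ?v - 1) = (if 1 \<le> r - 2 then d + r + 1 - 1 else d + 1)"
    using r2 by auto
  have "g (if ?v = d + 3 then d + 1 else ?v - 1) \<otimes> (s [^] (-2::int) \<otimes> \<one>) = \<one>"
    using rel[of ?v] r2 d by (simp add: N)
  then have "cc 1 \<otimes> s [^] (-2::int) = \<one>" unfolding cc_def i1 by simp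
  then have "cc 1 = inv (s [^] (-2::int))" by (simp add: solve2 cc_def)
  then have "cc 1 = s [^] (2::int)" by (simp add: int_pow_neg[symmetric])
  then show ?case using c0 by simp
next
  case (Suc m)
  have m: "m + 2 \<le> r - 1" using Suc.prems by simp
  have IH: "cc m = s [^] (int m + 1)" "cc (m + 1) = s [^] (int m + 2)" using Suc.IH m by auto
  let ?v = "d + r - m"
  have v: "?v < pp_nverts d r" "\<not> ?v \<le> d" "?v \<noteq> d + 1" "?v \<noteq> d + 2" "?v \<noteq> 0" "?v < d + r + 1"
    using m r2 unfolding N by arith+
  have a1: "m \<le> r - 2" "m + 1 \<le> r - 2" using m by arith+
  have ix1: "?v + 1 = d + r + 1 - m" using m by arith
  have ix2: "?v = d + r + 1 - (m + 1)" using m by arith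
  have i1: "g (?v + 1) = cc m" unfolding cc_def by (simp only: a1(1) if_True ix1)
  have i2: "g ?v = cc (m + 1)" unfolding cc_def by (simp only: a1(2) if_True ix2)
  have i3: "g (if ?v = d + 3 then d + 1 else ?v - 1) = cc (m + 2)"
  proof (cases "m + 2 \<le> r - 2")
    case True
    have ne: "(?v = d + 3) = False" using True by arith
    have ix3: "?v - 1 = d + r + 1 - (m + 2)" using True by arith
    show ?thesis unfolding cc_def by (simp only: True ne if_True if_False ix3)
  next
    case False
    have eq: "(?v = d + 3) = True" using False m by arith
    have F: "(m + 2 \<le> r - 2) = False" using False by simp
    show ?thesis unfolding cc_def by (simp only: F eq if_True if_False)
  qed
  have "g (if ?v = d + 3 then d + 1 else ?v - 1) \<otimes> (g ?v [^] (-2::int) \<otimes> g (?v + 1)) = \<one>"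
    using rel[OF v(1)] v by simp
  then have e: "cc (m + 2) \<otimes> (cc (m + 1) [^] (-2::int) \<otimes> cc m) = \<one>" unfolding i1 i2 i3 .
  have "cc (m + 2) = inv (cc m) \<otimes> inv (cc (m + 1) [^] (-2::int))"
    using solve_l[OF _ _ _ e] by (simp add: cc_def)
  also have "\<dots> = s [^] (- (int m + 1)) \<otimes> s [^] ((int m + 2) * 2)"
    unfolding IH by (simp add: int_pow_pow int_pow_neg[symmetric] add.commute)
  also have "\<dots> = s [^] (- (int m + 1) + (int m + 2) * 2)" by (simp only: pm gc)
  also have "- (int m + 1) + (int m + 2) * 2 = int (Suc m) + 2" by simp
  finally show ?case using IH by (simp add: algebra_simps)
qed

lemma s_r: "2 \<le> r \<Longrightarrow> g (d + 1) = s [^] (int r)"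
proof -
  assume r2: "2 \<le> r"
  have "cc (r - 2 + 1) = s [^] (int (r - 2) + 2)" using chain[OF r2, of "r - 2"] r2 by simp
  moreover have "cc (r - 2 + 1) = g (d + 1)" using r2 by (simp add: cc_def)
  moreover have "int (r - 2) + 2 = int r" using r2 by simp
  ultimately show ?thesis by simp
qed

lemma s_j: "2 \<le> r \<Longrightarrow> d + 3 \<le> v \<Longrightarrow> v \<le> d + r + 1 \<Longrightarrow> g v = s [^] (int d + int r + 2 - int v)"
proof -
  assume r2: "2 \<le> r" and v: "d + 3 \<le> v" "v \<le> d + r + 1"
  let ?m = "d + r + 1 - v"
  have "cc ?m = s [^] (int ?m + 1)" using chain[OF r2, of ?m] r2 v by simp
  moreover have "cc ?m = g v"
  proof -
    have a: "?m \<le> r - 2" "d + r + 1 - ?m = v" using r2 v by arith+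
    show ?thesis unfolding cc_def using a by simp
  qed
  moreover have "int ?m + 1 = int d + int r + 2 - int v" using v by simp
  ultimately show ?thesis by metis
qed

lemma ge2_u: "2 \<le> r \<Longrightarrow> inv t \<otimes> u = s"
proof -
  assume r2: "2 \<le> r"
  have e: "g d \<otimes> (g (d + 1) [^] (-2::int) \<otimes> (u \<otimes> g (d + 3))) = \<one>"
    using rel[of "d + 1"] r2 by (simp add: N)
  have g3: "g (d + 3) = s [^] (int r - 1)" using s_j[OF r2, of "d + 3"] r2 by simp
  have "u \<otimes> g (d + 3) = inv (g (d + 1) [^] (-2::int)) \<otimes> inv (g d)" using solve_r[OF _ _ _ e] by simp
  also have "\<dots> = t [^] (2 * int d) \<otimes> t [^] (1 - int d)"
    unfolding gd gd1 by (simp add: int_pow_pow int_pow_neg[symmetric] mult.commute)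
  also have "\<dots> = t [^] (2 * int d + (1 - int d))" by (simp only: pm gc)
  also have "2 * int d + (1 - int d) = (1::int) + int d" by simp
  also have "t [^] ((1::int) + int d) = t [^] (1::int) \<otimes> t [^] (int d)" by (simp only: pm gc)
  also have "\<dots> = t \<otimes> s [^] (int r)" using gd1 s_r[OF r2] by simp
  finally have c: "u \<otimes> s [^] (int r - 1) = t \<otimes> s [^] (int r)" unfolding g3 .
  have "u = (t \<otimes> s [^] (int r)) \<otimes> inv (s [^] (int r - 1))"
    using c by (simp add: inv_solve_right)
  also have "\<dots> = t \<otimes> (s [^] (int r) \<otimes> s [^] (- (int r - 1)))" by (simp add: m_assoc int_pow_neg[symmetric])
  also have "\<dots> = t \<otimes> s" by (simp add: pm)
  finally have "u = t \<otimes> s" .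
  then show ?thesis by (simp add: m_assoc[symmetric])
qed

definition "X = inv t \<otimes> u"

lemma X_closed [simp]: "X \<in> carrier G" by (simp add: X_def)

lemma xy1: "X [^] (int r) = t [^] (int d)"
proof (cases "r = 1")
  case True then show ?thesis using r1_u by (simp add: X_def)
next
  case False then have r2: "2 \<le> r" using r by simp
  show ?thesis using ge2_u[OF r2] s_r[OF r2] gd1 by (simp add: X_def)
qed

lemma xy2: "(X \<otimes> t) [^] (int d) = t [^] (int d)"
proof -
  have "(X \<otimes> t) [^] (int d) = (inv t \<otimes> u \<otimes> t) [^] d" by (simp add: X_def int_pow_int)
  also have "\<dots> = inv t \<otimes> u [^] d \<otimes> t" by (simp add: conj_pow)
  also have "u [^] d = t [^] (int d)" using ud by (simp add: int_pow_int)
  also have "inv t \<otimes> t [^] (int d) \<otimes> t = t [^] (int d)" by (simp add: conj_self)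
  finally show ?thesis .
qed

lemma F3: "v < pp_nverts d r \<Longrightarrow> Fimg G d r X t v = g v"
proof -
  assume v: "v < pp_nverts d r"
  consider "v \<le> d + 1" | "v = d + 2" | "d + 3 \<le> v" by linarith
  then show ?thesis
  proof cases
    case 1 then show ?thesis using low by (simp add: Fimg_def)
  next
    case 2 then show ?thesis by (simp add: Fimg_def X_def m_assoc[symmetric])
  next
    case 3
    then have r2: "2 \<le> r" "v \<le> d + r + 1" using v by (auto simp: N)
    then show ?thesis using 3 ge2_u[OF r2(1)] s_j[OF r2(1) 3 r2(2)] by (simp add: Fimg_def X_def)
  qed
qed

end



definition R2 :: "nat \<Rightarrow> nat \<Rightarrow> nat word set" where
  "R2 d r = { pow_word 0 (int r) @ inv_word (pow_word 1 (int d)),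
       pow_word 1 (int d) @ inv_word (concat (replicate d [(0, True), (1, True)])) }"

lemma xy_eq: "xy_group d r = presented_group {0, 1} (R2 d r)"
  by (simp add: xy_group_def R2_def)

lemma words_on_pow_word: "a \<in> S \<Longrightarrow> pow_word a k \<in> words_on S"
  by (auto simp: pow_word_def words_on_def)

lemma words_on_concat_rep: "w \<in> words_on S \<Longrightarrow> concat (replicate n w) \<in> words_on S"
  by (induction n) auto

lemma R2_words: "R2 d r \<subseteq> words_on {0, 1}"
  by (auto simp: R2_def words_on_pow_word intro!: words_on_concat_rep)

lemma R1_words:
  assumes "2 \<le> d" "1 \<le> r"
  shows "R1 d r \<subseteq> words_on {..<pp_nverts d r}"
proof
  fix w assume "w \<in> R1 d r"
  then consider v where "v < pp_nverts d r" "w = vertex_relator (pp_nverts d r) (pp_weight d 1 r) (pp_adj d r) v"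
    | u v where "u < pp_nverts d r" "v < pp_nverts d r" "w = commutator_word u v"
    unfolding R1_def by blast
  then show "w \<in> words_on {..<pp_nverts d r}"
  proof cases
    case 1
    have sub: "set (ppL d r v) \<subseteq> {..<pp_nverts d r}"
      using ppL_set[OF assms 1(1)] 1(1) by auto
    show ?thesis unfolding 1(2) vertex_relator_pp[OF assms 1(1)]
      using sub 1(1) by (auto simp: words_on_def pow_word_def)
  next
    case 2 then show ?thesis by (simp add: commutator_word_def)
  qed
qed

context group begin

lemma mul_inv_one: "a \<in> carrier G \<Longrightarrow> b \<in> carrier G \<Longrightarrow> (a \<otimes> inv b = \<one>) = (a = b)"
  by (metis inv_equality inv_inv inv_closed r_inv inv_comm)

lemma ev_R2:
  assumes f: "range f \<subseteq> carrier G"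
  shows "(\<forall>w\<in>R2 d r. ev G f w = \<one>) \<longleftrightarrow>
     (f 0 [^] (int r) = f 1 [^] (int d) \<and> (f 0 \<otimes> f 1) [^] (int d) = f 1 [^] (int d))"
proof -
  have fc: "\<And>a. f a \<in> carrier G" using f by auto
  have e1: "ev G f (pow_word 0 (int r) @ inv_word (pow_word 1 (int d))) = f 0 [^] (int r) \<otimes> inv (f 1 [^] (int d))"
    by (simp add: ev_append[OF f] ev_inv_word[OF f] ev_pow_word[OF f])
  have e2: "ev G f (pow_word 1 (int d) @ inv_word (concat (replicate d [(0, True), (1, True)])))
      = f 1 [^] (int d) \<otimes> inv ((f 0 \<otimes> f 1) [^] (int d))"
    using fc by (simp add: ev_append[OF f] ev_inv_word[OF f] ev_pow_word[OF f] ev_concat_replicate[OF f] int_pow_int)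
  have "(\<forall>w\<in>R2 d r. ev G f w = \<one>) \<longleftrightarrow>
     (ev G f (pow_word 0 (int r) @ inv_word (pow_word 1 (int d))) = \<one> \<and>
      ev G f (pow_word 1 (int d) @ inv_word (concat (replicate d [(0, True), (1, True)]))) = \<one>)"
    unfolding R2_def by simp
  also have "\<dots> \<longleftrightarrow> (f 0 [^] (int r) \<otimes> inv (f 1 [^] (int d)) = \<one> \<and>
       f 1 [^] (int d) \<otimes> inv ((f 0 \<otimes> f 1) [^] (int d)) = \<one>)"
    unfolding e1 e2 ..
  also have "\<dots> \<longleftrightarrow> (f 0 [^] (int r) = f 1 [^] (int d) \<and> f 1 [^] (int d) = (f 0 \<otimes> f 1) [^] (int d))"
    by (simp only: mul_inv_one int_pow_closed fc m_closed)
  finally show ?thesis by auto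
qed

end

lemma hom_Fimg:
  assumes "group G" "group H" "k \<in> hom G H" "x \<in> carrier G" "y \<in> carrier G"
  shows "k (Fimg G d r x y v) = Fimg H d r (k x) (k y) v"
proof -
  interpret gh: group_hom G H k using assms by (simp add: group_hom_def group_hom_axioms_def)
  show ?thesis using assms by (auto simp: Fimg_def gh.hom_int_pow)
qed

lemma lift_gen:
  assumes "group H" "range f \<subseteq> carrier H" "\<forall>r\<in>R. ev H f r = \<one>\<^bsub>H\<^esub>" "a \<in> S"
  shows "lift H f (gen S R a) = f a"
proof -
  have "lift H f (gen S R a) = ev H f [(a, True)]"
    using assms by (simp add: gen_def lift_cls)
  then show ?thesis using group.ev_single[OF assms(1,2), of a] by metis
qed

theorem main_iso:
  assumes d: "2 \<le> d" and r: "1 \<le> r"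
  shows "pi1_inf_pseudo_plane d 1 r \<cong> xy_group d r"
proof -
  let ?S1 = "{..<pp_nverts d r}" and ?S2 = "{0::nat, 1}"
  let ?P1 = "presented_group ?S1 (R1 d r)" and ?P2 = "presented_group ?S2 (R2 d r)"
  have G1: "group ?P1" and G2: "group ?P2" by (rule group_pres)+
  let ?x = "gen ?S2 (R2 d r) 0" and ?y = "gen ?S2 (R2 d r) 1"
  have g2r: "range (gen ?S2 (R2 d r)) \<subseteq> carrier ?P2" by (rule gen_range)
  have "\<forall>w\<in>R2 d r. ev ?P2 (gen ?S2 (R2 d r)) w = \<one>\<^bsub>?P2\<^esub>"
    using relator_one R2_words by blast
  then have hxy: "?x [^]\<^bsub>?P2\<^esub> (int r) = ?y [^]\<^bsub>?P2\<^esub> (int d)"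
    "(?x \<otimes>\<^bsub>?P2\<^esub> ?y) [^]\<^bsub>?P2\<^esub> (int d) = ?y [^]\<^bsub>?P2\<^esub> (int d)"
    using group.ev_R2[OF G2 g2r] by auto
  have xc: "?x \<in> carrier ?P2" "?y \<in> carrier ?P2" using g2r by auto
  let ?f1 = "Fimg ?P2 d r ?x ?y"
  have f1: "range ?f1 \<subseteq> carrier ?P2" by (rule group.Fimg_closed[OF G2 xc])
  have r1: "\<forall>w\<in>R1 d r. ev ?P2 ?f1 w = \<one>\<^bsub>?P2\<^esub>"
    by (rule group.B_all[OF G2 d r xc hxy])
  let ?g = "gen ?S1 (R1 d r)"
  have g1r: "range ?g \<subseteq> carrier ?P1" by (rule gen_range)
  have H1: "\<forall>w\<in>R1 d r. ev ?P1 ?g w = \<one>\<^bsub>?P1\<^esub>"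
    using relator_one R1_words[OF d r] by blast
  interpret gc: gchain ?P1 d r ?g
  proof (rule gchain.intro[OF G1])
    show "gchain_axioms ?P1 d r ?g" by (rule gchain_axioms.intro[OF d r g1r H1])
  qed
  let ?f2 = "\<lambda>b::nat. if b = 0 then gc.X else if b = 1 then ?g 2 else \<one>\<^bsub>?P1\<^esub>"
  have f2: "range ?f2 \<subseteq> carrier ?P1" by auto
  have r2: "\<forall>w\<in>R2 d r. ev ?P1 ?f2 w = \<one>\<^bsub>?P1\<^esub>"
    using group.ev_R2[OF G1 f2] gc.xy1 gc.xy2 by simp
  let ?k = "lift ?P1 ?f2" and ?h = "lift ?P2 ?f1"
  have k: "?k \<in> hom ?P2 ?P1" by (rule lift_hom[OF G1 f2 r2])
  have h: "?h \<in> hom ?P1 ?P2" by (rule lift_hom[OF G2 f1 r1])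
  have kx: "?k ?x = gc.X" using lift_gen[OF G1 f2 r2, where a = 0 and S = ?S2] by simp
  have ky: "?k ?y = ?g 2" using lift_gen[OF G1 f2 r2, where a = 1 and S = ?S2] by simp
  have rt1: "?k (?f1 a) = ?g a" if a: "a \<in> ?S1" for a
  proof -
    have "?k (?f1 a) = Fimg ?P1 d r (?k ?x) (?k ?y) a" by (rule hom_Fimg[OF G2 G1 k xc])
    also have "\<dots> = ?g a" unfolding kx ky using a by (simp add: gc.F3)
    finally show ?thesis .
  qed
  have h2: "?h (?g 2) = ?y"
  proof -
    have "?h (?g 2) = ?f1 2" using lift_gen[OF G2 f1 r1, where a = 2 and S = ?S1] d by (simp add: pp_nverts_def)
    then show ?thesis using xc G2 d by (simp add: Fimg_def group.int_pow_1)
  qed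
  have hu: "?h (?g (d + 2)) = ?y \<otimes>\<^bsub>?P2\<^esub> ?x"
  proof -
    have "?h (?g (d + 2)) = ?f1 (d + 2)" using lift_gen[OF G2 f1 r1, where a = "d + 2" and S = ?S1] r by (simp add: pp_nverts_def)
    then show ?thesis by (simp add: Fimg_def)
  qed
  have rt2: "?h (?f2 b) = gen ?S2 (R2 d r) b" if b: "b \<in> ?S2" for b
  proof (cases "b = 0")
    case True
    interpret gh: group_hom ?P1 ?P2 ?h using G1 G2 h by (simp add: group_hom_def group_hom_axioms_def)
    have "?h gc.X = inv\<^bsub>?P2\<^esub> (?h (?g 2)) \<otimes>\<^bsub>?P2\<^esub> ?h (?g (d + 2))"
    proof -
      have i: "inv\<^bsub>?P1\<^esub> (?g 2) \<in> carrier ?P1" by (simp add: group.inv_closed[OF G1])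
      have "?h gc.X = ?h (inv\<^bsub>?P1\<^esub> (?g 2)) \<otimes>\<^bsub>?P2\<^esub> ?h (?g (d + 2))"
        unfolding gc.X_def by (rule gh.hom_mult[OF i gc.gc])
      then show ?thesis using gh.hom_inv[OF gc.gc[of 2]] by simp
    qed
    also have "\<dots> = ?x"
    proof -
      show ?thesis unfolding h2 hu using group.inv_solve_left'[OF G2 xc(1) xc(2) monoid.m_closed[OF group.is_monoid[OF G2] xc(2) xc(1)]] by blast
    qed
    finally show ?thesis using True by simp
  next
    case False then have "b = 1" using b by simp
    then show ?thesis using h2 by simp
  qed
  have "?P1 \<cong> ?P2"
    by (rule pres_iso[OF f1 r1 f2 r2]) (use rt1 rt2 in auto)
  then show ?thesis unfolding pi1_eq xy_eq .
qed




lemma (in group) ev_subgroup: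
  assumes "subgroup K G" "\<And>a. f a \<in> K"
  shows "ev G f w \<in> K"
proof (induction w)
  case Nil then show ?case using assms(1) by (simp add: subgroup.one_closed)
next
  case (Cons x w)
  obtain a b where x: "x = (a, b)" by force
  show ?case using Cons assms by (auto simp: x subgroup.m_closed subgroup.m_inv_closed)
qed

lemma (in group) pow_mod:
  assumes t: "t \<in> carrier G" and n: "t [^] (int n) = \<one>"
  shows "t [^] (k::int) = t [^] (k mod int n)"
proof -
  have "t [^] k = t [^] (int n * (k div int n) + k mod int n)" by simp
  also have "\<dots> = t [^] (int n * (k div int n)) \<otimes> t [^] (k mod int n)"
    by (rule int_pow_mult[OF t])
  also have "t [^] (int n * (k div int n)) = (t [^] (int n)) [^] (k div int n)"
    using t by (simp add: int_pow_pow)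
  also have "(t [^] (int n)) [^] (k div int n) \<otimes> t [^] (k mod int n) = t [^] (k mod int n)"
    using t n by simp
  finally show ?thesis .
qed

theorem main_r1:
  assumes d: "2 \<le> d" and r1: "r = 1"
  shows "order (pi1_inf_pseudo_plane d 1 r) = d ^ 2 \<and>
     (\<exists>g \<in> carrier (pi1_inf_pseudo_plane d 1 r).
        generate (pi1_inf_pseudo_plane d 1 r) {g} = carrier (pi1_inf_pseudo_plane d 1 r))"
proof -
  let ?S1 = "{..<pp_nverts d r}"
  let ?P = "presented_group ?S1 (R1 d r)"
  let ?g = "gen ?S1 (R1 d r)"
  have r: "1 \<le> r" using r1 by simp
  have G1: "group ?P" by (rule group_pres)
  interpret P: group ?P by (rule G1)
  have g1r: "range ?g \<subseteq> carrier ?P" by (rule gen_range)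
  have H1: "\<forall>w\<in>R1 d r. ev ?P ?g w = \<one>\<^bsub>?P\<^esub>"
    using relator_one R1_words[OF d r] by blast
  interpret gc: gchain ?P d r ?g
  proof (rule gchain.intro[OF G1])
    show "gchain_axioms ?P d r ?g" by (rule gchain_axioms.intro[OF d r g1r H1])
  qed
  let ?t = "?g 2"
  have tc: "?t \<in> carrier ?P" by (rule gc.gc)
  have u: "?g (d + 2) = ?t [^]\<^bsub>?P\<^esub> (int d + 1)"
  proof -
    have "?g (d + 2) = ?t \<otimes>\<^bsub>?P\<^esub> (inv\<^bsub>?P\<^esub> ?t \<otimes>\<^bsub>?P\<^esub> ?g (d + 2))"
      by (simp add: P.m_assoc[symmetric])
    also have "\<dots> = ?t [^]\<^bsub>?P\<^esub> (1::int) \<otimes>\<^bsub>?P\<^esub> ?t [^]\<^bsub>?P\<^esub> (int d)" using gc.r1_u[OF r1] by simp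
    also have "\<dots> = ?t [^]\<^bsub>?P\<^esub> (int d + 1)" by (simp only: P.pm[OF tc] add.commute)
    finally show ?thesis .
  qed
  let ?n = "d ^ 2"
  have tn: "?t [^]\<^bsub>?P\<^esub> (int ?n) = \<one>\<^bsub>?P\<^esub>"
  proof -
    have "?t [^]\<^bsub>?P\<^esub> ((int d + 1) * int d) = ?t [^]\<^bsub>?P\<^esub> (int d)"
      using gc.ud u by (simp add: P.int_pow_pow)
    then have "?t [^]\<^bsub>?P\<^esub> (int ?n + int d) = ?t [^]\<^bsub>?P\<^esub> (int d)"
      by (simp add: algebra_simps power2_eq_square)
    then have "?t [^]\<^bsub>?P\<^esub> (int ?n) \<otimes>\<^bsub>?P\<^esub> ?t [^]\<^bsub>?P\<^esub> (int d) = \<one>\<^bsub>?P\<^esub> \<otimes>\<^bsub>?P\<^esub> ?t [^]\<^bsub>?P\<^esub> (int d)"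
      by (simp add: P.int_pow_mult)
    then show ?thesis using tc by (simp add: P.right_cancel)
  qed
  let ?K = "generate ?P {?t}"
  have Ksub: "subgroup ?K ?P" by (rule P.generate_is_subgroup) simp
  have Kpow: "?K = {?t [^]\<^bsub>?P\<^esub> (k::int) | k. k \<in> UNIV}" by (rule P.generate_pow[OF tc])
  have gK: "?g a \<in> ?K" for a
  proof -
    have "\<exists>k::int. ?g a = ?t [^]\<^bsub>?P\<^esub> k"
    proof (cases "a \<le> d + 1")
      case True then show ?thesis using gc.low by blast
    next
      case False
      show ?thesis
      proof (cases "a = d + 2")
        case True then show ?thesis using u by blast
      next
        case False
        then have "a \<notin> ?S1" using \<open>\<not> a \<le> d + 1\<close> r1 by (auto simp: pp_nverts_def)
        then have "?g a = \<one>\<^bsub>?P\<^esub>" by (simp add: gen_def one_pres)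
        then show ?thesis by (metis int_pow_0)
      qed
    qed
    then show ?thesis unfolding Kpow by blast
  qed
  have carrK: "carrier ?P = ?K"
  proof
    show "carrier ?P \<subseteq> ?K"
    proof
      fix A assume "A \<in> carrier ?P"
      then obtain w where w: "w \<in> words_on ?S1" "A = cls ?S1 (R1 d r) w" unfolding carrier_pres by blast
      have "ev ?P ?g w \<in> ?K" by (rule P.ev_subgroup[OF Ksub gK])
      then show "A \<in> ?K" using w ev_gen by metis
    qed
    show "?K \<subseteq> carrier ?P" using Ksub by (simp add: subgroup.subset)
  qed
  have carr_img: "carrier ?P = (\<lambda>k::nat. ?t [^]\<^bsub>?P\<^esub> (int k)) ` {..<?n}"
  proof
    show "(\<lambda>k::nat. ?t [^]\<^bsub>?P\<^esub> (int k)) ` {..<?n} \<subseteq> carrier ?P" by auto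
    show "carrier ?P \<subseteq> (\<lambda>k::nat. ?t [^]\<^bsub>?P\<^esub> (int k)) ` {..<?n}"
    proof
      fix A assume "A \<in> carrier ?P"
      then obtain k :: int where k: "A = ?t [^]\<^bsub>?P\<^esub> k" using carrK Kpow by blast
      have npos: "0 < int ?n" using d by simp
      have "A = ?t [^]\<^bsub>?P\<^esub> (k mod int ?n)" using k P.pow_mod[OF tc tn] by simp
      also have "k mod int ?n = int (nat (k mod int ?n))" using npos by simp
      finally have "A = ?t [^]\<^bsub>?P\<^esub> (int (nat (k mod int ?n)))" .
      moreover have "nat (k mod int ?n) < ?n" using npos by (simp add: nat_less_iff)
      ultimately show "A \<in> (\<lambda>k::nat. ?t [^]\<^bsub>?P\<^esub> (int k)) ` {..<?n}" by blast
    qed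
  qed
  let ?Z = "integer_mod_group ?n"
  have GZ: "group ?Z" by simp
  have n1: "?n \<noteq> 0" "?n \<noteq> 1" using d by (auto simp: power2_eq_square)
  have dlt: "d < ?n" using d by (simp add: power2_eq_square)
  have xZ: "int d \<in> carrier ?Z" using n1 dlt by (simp add: carrier_integer_mod_group)
  have yZ: "(1::int) \<in> carrier ?Z" using n1 by simp
  have hx: "int d [^]\<^bsub>?Z\<^esub> (int r) = 1 [^]\<^bsub>?Z\<^esub> (int d)" using r1 by (simp add: int_pow_integer_mod_group)
  have hy: "(int d \<otimes>\<^bsub>?Z\<^esub> 1) [^]\<^bsub>?Z\<^esub> (int d) = 1 [^]\<^bsub>?Z\<^esub> (int d)"
  proof -
    have "(int d \<otimes>\<^bsub>?Z\<^esub> 1) [^]\<^bsub>?Z\<^esub> (int d) = (int d * ((int d + 1) mod int ?n)) mod int ?n"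
      by (simp add: int_pow_integer_mod_group)
    also have "\<dots> = (int d * (int d + 1)) mod int ?n" by (simp add: mod_mult_right_eq)
    also have "int d * (int d + 1) = int d + int ?n" by (simp add: algebra_simps power2_eq_square)
    also have "(int d + int ?n) mod int ?n = int d mod int ?n" by simp
    also have "\<dots> = 1 [^]\<^bsub>?Z\<^esub> (int d)" by (simp add: int_pow_integer_mod_group)
    finally show ?thesis .
  qed
  let ?fz = "Fimg ?Z d r (int d) 1"
  have fz: "range ?fz \<subseteq> carrier ?Z" by (rule group.Fimg_closed[OF GZ xZ yZ])
  have rz: "\<forall>w\<in>R1 d r. ev ?Z ?fz w = \<one>\<^bsub>?Z\<^esub>" by (rule group.B_all[OF GZ d r xZ yZ hx hy])
  let ?chi = "lift ?Z ?fz"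
  have chi: "?chi \<in> hom ?P ?Z" by (rule lift_hom[OF GZ fz rz])
  interpret ch: group_hom ?P ?Z ?chi using G1 GZ chi by (simp add: group_hom_def group_hom_axioms_def)
  have chit: "?chi ?t = 1"
  proof -
    have "?chi ?t = ?fz 2" using lift_gen[OF GZ fz rz, where a = 2 and S = ?S1] using d by (simp add: pp_nverts_def)
    then show ?thesis using d n1 by (simp add: Fimg_def int_pow_integer_mod_group)
  qed
  have chik: "?chi (?t [^]\<^bsub>?P\<^esub> (int k)) = int k mod int ?n" for k :: nat
    using ch.hom_int_pow[OF tc, of "int k"] chit by (simp add: int_pow_integer_mod_group)
  have inj: "inj_on (\<lambda>k::nat. ?t [^]\<^bsub>?P\<^esub> (int k)) {..<?n}"
  proof (rule inj_onI)
    fix a b :: nat assume a: "a \<in> {..<?n}" and b: "b \<in> {..<?n}"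
      and e: "?t [^]\<^bsub>?P\<^esub> (int a) = ?t [^]\<^bsub>?P\<^esub> (int b)"
    have "int a mod int ?n = int b mod int ?n" using chik[of a] chik[of b] e by simp
    then show "a = b" using a b by simp
  qed
  have ord: "order ?P = ?n"
    unfolding order_def carr_img using card_image[OF inj] by simp
  have gen: "\<exists>g \<in> carrier ?P. generate ?P {g} = carrier ?P"
    using tc carrK by blast
  show ?thesis using ord gen unfolding pi1_eq by blast
qed



theorem lemma1p4p9:
  fixes d r :: nat
  assumes "d \<ge> 2" and "r \<ge> 1"
  shows "pi1_inf_pseudo_plane d 1 r \<cong> xy_group d r
     \<and> (r = 1 \<longrightarrow>
          order (pi1_inf_pseudo_plane d 1 r) = d ^ 2 \<and>
          (\<exists>g \<in> carrier (pi1_inf_pseudo_plane d 1 r).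
              generate (pi1_inf_pseudo_plane d 1 r) {g} = carrier (pi1_inf_pseudo_plane d 1 r)))"
  using main_iso[OF assms] main_r1[OF assms(1)] by blast

end
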